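(* Let $(G_i)_{i\in I}$ be a family of convergence groups, let $G=\prod_{i\in I}G_i$ with the product convergence structure, and let $e_i: G_i\to G$ be the natural injections. If $M\subseteq \Gamma_s G$ is compact, then there is a finite set $I_0\subseteq I$ such that $\varphi\circ e_i = 0$ for all $\varphi\in M$ and all $i\in I\setminus I_0$.
   Context: All groups are abelian. A convergence group is an abelian group with a convergence structure (an assignment to each point $x$ of a collection of filters converging to $x$). This assignment must satisfy three conditions: point ultrafilters converge to their point; finite intersections of filters converging to $x$ converge to $x$; and finer filters converge. The group operation must be compatible: $\mathcal F\to x$, $\mathcal G\to y$ imply $\mathcal F-\mathcal G\to x-y$. In the product convergence structure, a filter converges iff all its coordinate projections converge. $\mathbb T=\mathbb R/\mathbb Z$. $\Gamma G$ is the group of continuous homomorphisms $G\to\mathbb T$, and $\Gamma_s G$ is $\Gamma G$ with the topology of pointwise convergence on $G$. *)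

theory Defs
  imports "HOL-Analysis.Analysis" "HOL-Algebra.Product_Groups"
begin

text \<open>Filters live on the ambient type;
  a filter "on the carrier" is one that eventually lies in the carrier.
  Isabelle's filter order is reversed w.r.t. inclusion of filters as set systems:
  the intersection of two set-filters is sup, and "finer" means smaller.\<close>

definition convergence_group ::
  "('a, 'b) monoid_scheme \<Rightarrow> ('a filter \<Rightarrow> 'a \<Rightarrow> bool) \<Rightarrow> bool" where
  "convergence_group G conv \<longleftrightarrow>
     comm_group G \<and>
     (\<forall>F x. conv F x \<longrightarrow> x \<in> carrier G \<and> eventually (\<lambda>y. y \<in> carrier G) F) \<and>
     (\<forall>x \<in> carrier G. conv (principal {x}) x) \<and>
     (\<forall>F F' x. conv F x \<and> conv F' x \<longrightarrow> conv (sup F F') x) \<and>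
     (\<forall>F F' x. conv F x \<and> F' \<le> F \<longrightarrow> conv F' x) \<and>
     (\<forall>F F' x y. conv F x \<and> conv F' y \<longrightarrow>
        conv (filtermap (\<lambda>(a, b). a \<otimes>\<^bsub>G\<^esub> inv\<^bsub>G\<^esub> b) (F \<times>\<^sub>F F'))
             (x \<otimes>\<^bsub>G\<^esub> inv\<^bsub>G\<^esub> y))"

definition product_conv ::
  "'i set \<Rightarrow> ('i \<Rightarrow> ('a, 'b) monoid_scheme) \<Rightarrow> ('i \<Rightarrow> 'a filter \<Rightarrow> 'a \<Rightarrow> bool)
     \<Rightarrow> ('i \<Rightarrow> 'a) filter \<Rightarrow> ('i \<Rightarrow> 'a) \<Rightarrow> bool" where
  "product_conv I G conv F x \<longleftrightarrow>
     x \<in> (\<Pi>\<^sub>E i\<in>I. carrier (G i)) \<and>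
     eventually (\<lambda>y. y \<in> (\<Pi>\<^sub>E i\<in>I. carrier (G i))) F \<and>
     (\<forall>i\<in>I. conv i (filtermap (\<lambda>y. y i) F) (x i))"

definition prod_inj ::
  "'i set \<Rightarrow> ('i \<Rightarrow> ('a, 'b) monoid_scheme) \<Rightarrow> 'i \<Rightarrow> 'a \<Rightarrow> ('i \<Rightarrow> 'a)" where
  "prod_inj I G i g = (\<lambda>j\<in>I. if j = i then g else \<one>\<^bsub>G j\<^esub>)"

text \<open>The circle group T = R/Z is represented (isomorphically, as a topological
  group, via t \<mapsto> exp(2 pi i t)) by the unit circle in the complex numbers under
  multiplication; the zero of T corresponds to 1.
  Gamma G: continuous homomorphisms G \<rightarrow> T, taken extensional on the carrier.\<close>

definition characters ::
  "('a, 'b) monoid_scheme \<Rightarrow> ('a filter \<Rightarrow> 'a \<Rightarrow> bool) \<Rightarrow> ('a \<Rightarrow> complex) set" where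
  "characters G conv = {ch.
     ch \<in> extensional (carrier G) \<and>
     (\<forall>x\<in>carrier G. cmod (ch x) = 1) \<and>
     (\<forall>x\<in>carrier G. \<forall>y\<in>carrier G. ch (x \<otimes>\<^bsub>G\<^esub> y) = ch x * ch y) \<and>
     (\<forall>F x. conv F x \<longrightarrow> filterlim ch (nhds (ch x)) F)}"

text \<open>Topology of pointwise convergence on G (Gamma_s G carries the subspace topology).\<close>

definition pointwise_top :: "'a set \<Rightarrow> ('a \<Rightarrow> complex) topology" where
  "pointwise_top X = product_topology (\<lambda>_. euclidean) X"

end

theory Submission
  imports Defs
begin


lemma re_gt_half:
  fixes z :: complex assumes "cmod z = 1" "cmod (z - 1) < 1" shows "Re z > 1/2"
proof -
  have "(cmod z)^2 = (Re z)^2 + (Im z)^2" by (simp add: cmod_power2)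
  moreover have "(cmod (z-1))^2 = (Re z - 1)^2 + (Im z)^2" by (simp add: cmod_power2)
  moreover have "(cmod (z-1))^2 < 1" using assms(2) by (simp add: power_less_one_iff)
  ultimately show ?thesis using assms(1) by (simp add: power2_eq_square algebra_simps)
qed

lemma sq_step:
  fixes z :: complex assumes "cmod z = 1" "cmod (z - 1) < 1"
  shows "cmod (z * z - 1) \<ge> 3/2 * cmod (z - 1)"
proof -
  have "z * z - 1 = (z - 1) * (z + 1)" by (simp add: algebra_simps)
  hence e: "cmod (z*z - 1) = cmod (z - 1) * cmod (z + 1)" by (simp add: norm_mult)
  have "cmod (z+1) \<ge> Re (z + 1)" by (rule complex_Re_le_cmod)
  hence "cmod (z+1) \<ge> 3/2" using re_gt_half[OF assms] by simp
  hence "cmod (z-1) * (3/2) \<le> cmod (z-1) * cmod (z+1)" by (rule mult_left_mono) auto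
  thus ?thesis unfolding e by linarith
qed

lemma sq_trick:
  fixes f :: "'x \<Rightarrow> complex"
  assumes x: "x \<in> S" and cl: "\<And>y. y \<in> S \<Longrightarrow> \<exists>z\<in>S. f z = f y * f y"
    and un: "\<And>y. y \<in> S \<Longrightarrow> cmod (f y) = 1"
    and sm: "\<And>y. y \<in> S \<Longrightarrow> cmod (f y - 1) < 1"
  shows "f x = 1"
proof (rule ccontr)
  assume ne: "f x \<noteq> 1"
  define d where "d = cmod (f x - 1)"
  have d: "d > 0" using ne by (simp add: d_def)
  have "\<exists>y\<in>S. cmod (f y - 1) \<ge> (3/2)^n * d" for n
  proof (induction n)
    case 0 then show ?case using x by (auto simp: d_def)
  next
    case (Suc n)
    then obtain y where y: "y \<in> S" "cmod (f y - 1) \<ge> (3/2)^n * d" by auto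
    obtain z where z: "z \<in> S" "f z = f y * f y" using cl[OF y(1)] by auto
    have "cmod (f z - 1) \<ge> 3/2 * cmod (f y - 1)"
      using sq_step[OF un[OF y(1)] sm[OF y(1)]] z(2) by simp
    moreover have "3/2 * cmod (f y - 1) \<ge> 3/2 * ((3/2)^n * d)" using y(2) by (rule mult_left_mono) simp
    moreover have "(3/2::real)^Suc n * d = 3/2 * ((3/2)^n * d)" by simp
    ultimately show ?case using z(1) by (intro bexI[of _ z]) linarith+
  qed
  moreover obtain n where "1/d < (3/2::real)^n" using real_arch_pow[of "3/2" "1/d"] by auto
  ultimately obtain y where "y \<in> S" "cmod (f y - 1) \<ge> (3/2)^n * d" by auto
  moreover have "(3/2)^n * d > 1" using \<open>1/d < _\<close> d by (simp add: field_simps)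
  ultimately show False using sm by fastforce
qed


definition fixset :: "'i set \<Rightarrow> ('i \<Rightarrow> ('a, 'b) monoid_scheme) \<Rightarrow> 'i set \<Rightarrow> ('i \<Rightarrow> 'a) set" where
  "fixset I G J = {x \<in> (\<Pi>\<^sub>E i\<in>I. carrier (G i)). \<forall>j\<in>J. x j = \<one>\<^bsub>G j\<^esub>}"

lemma char_one:
  assumes "\<phi> \<in> characters H cv" "group H"
  shows "\<phi> \<one>\<^bsub>H\<^esub> = 1"
proof -
  have c: "\<one>\<^bsub>H\<^esub> \<in> carrier H" using assms(2) by (simp add: group.is_monoid monoid.one_closed)
  have "\<phi> (\<one>\<^bsub>H\<^esub> \<otimes>\<^bsub>H\<^esub> \<one>\<^bsub>H\<^esub>) = \<phi> \<one>\<^bsub>H\<^esub> * \<phi> \<one>\<^bsub>H\<^esub>"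
    using assms(1) c by (auto simp: characters_def)
  moreover have "\<one>\<^bsub>H\<^esub> \<otimes>\<^bsub>H\<^esub> \<one>\<^bsub>H\<^esub> = \<one>\<^bsub>H\<^esub>" using assms(2) c by (simp add: group.is_monoid monoid.l_one)
  moreover have "\<phi> \<one>\<^bsub>H\<^esub> \<noteq> 0" using assms(1) c by (auto simp: characters_def)
  ultimately show ?thesis by (metis mult_cancel_left2)
qed

lemma cg_group: "convergence_group H cv \<Longrightarrow> group H"
  by (simp add: convergence_group_def comm_group_def)

lemma char_support:
  assumes cg: "\<forall>i\<in>I. convergence_group (G i) (conv i)"
    and ph: "\<phi> \<in> characters (product_group I G) (product_conv I G conv)"
  shows "\<exists>J. finite J \<and> J \<subseteq> I \<and> (\<forall>x\<in>fixset I G J. \<phi> x = 1)"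
proof -
  have grp: "group (product_group I G)" by (rule product_group) (use cg cg_group in auto)
  define B where "B = {J. finite J \<and> J \<subseteq> I}"
  define F where "F = (INF J\<in>B. principal (fixset I G J))"
  have evF: "eventually P F \<longleftrightarrow> (\<exists>J\<in>B. eventually P (principal (fixset I G J)))" for P
    unfolding F_def
  proof (rule eventually_INF_base)
    show "B \<noteq> {}" unfolding B_def by auto
    fix a b assume "a \<in> B" "b \<in> B"
    then show "\<exists>x\<in>B. principal (fixset I G x) \<le> inf (principal (fixset I G a)) (principal (fixset I G b))"
      by (intro bexI[of _ "a \<union> b"]) (auto simp: B_def fixset_def)
  qed
  have pc: "product_conv I G conv F (\<lambda>i\<in>I. \<one>\<^bsub>G i\<^esub>)"
    unfolding product_conv_def
  proof (intro conjI ballI)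
    show "(\<lambda>i\<in>I. \<one>\<^bsub>G i\<^esub>) \<in> (\<Pi>\<^sub>E i\<in>I. carrier (G i))"
      using cg by (auto dest!: cg_group simp: group.is_monoid monoid.one_closed)
    show "eventually (\<lambda>y. y \<in> (\<Pi>\<^sub>E i\<in>I. carrier (G i))) F"
      unfolding evF by (intro bexI[of _ "{}"]) (auto simp: B_def fixset_def eventually_principal)
    fix i assume i: "i \<in> I"
    have "filtermap (\<lambda>y. y i) F \<le> principal {\<one>\<^bsub>G i\<^esub>}"
      unfolding le_principal eventually_filtermap evF
      using i by (intro bexI[of _ "{i}"]) (auto simp: B_def fixset_def eventually_principal)
    moreover have "conv i (principal {\<one>\<^bsub>G i\<^esub>}) \<one>\<^bsub>G i\<^esub>"
    proof -
      have "group (G i)" using cg i cg_group by auto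
      hence "\<one>\<^bsub>G i\<^esub> \<in> carrier (G i)" by (simp add: group.is_monoid monoid.one_closed)
      thus ?thesis using cg i by (auto simp: convergence_group_def)
    qed
    ultimately show "conv i (filtermap (\<lambda>y. y i) F) ((\<lambda>i\<in>I. \<one>\<^bsub>G i\<^esub>) i)"
      using cg i by (auto simp: convergence_group_def)
  qed
  have one: "\<phi> (\<lambda>i\<in>I. \<one>\<^bsub>G i\<^esub>) = 1" using char_one[OF ph grp] by simp
  have "filterlim \<phi> (nhds (\<phi> (\<lambda>i\<in>I. \<one>\<^bsub>G i\<^esub>))) F" using ph pc unfolding characters_def by blast
  hence "filterlim \<phi> (nhds 1) F" using one by simp
  hence "eventually (\<lambda>x. dist (\<phi> x) 1 < 1) F" by (rule tendstoD) simp
  then obtain J where J: "J \<in> B" "\<forall>x\<in>fixset I G J. dist (\<phi> x) 1 < 1"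
    unfolding evF eventually_principal by auto
  have "\<forall>x\<in>fixset I G J. \<phi> x = 1"
  proof
    fix x assume x: "x \<in> fixset I G J"
    show "\<phi> x = 1"
    proof (rule sq_trick[OF x])
      fix y assume y: "y \<in> fixset I G J"
      hence yc: "y \<in> carrier (product_group I G)" by (simp add: fixset_def)
      have "y \<otimes>\<^bsub>product_group I G\<^esub> y \<in> fixset I G J"
        using y J(1) cg unfolding fixset_def B_def
        by (auto simp: PiE_iff dest!: cg_group intro: group.is_monoid monoid.m_closed monoid.l_one)
      moreover have "\<phi> (y \<otimes>\<^bsub>product_group I G\<^esub> y) = \<phi> y * \<phi> y"
        using ph yc by (auto simp: characters_def)
      ultimately show "\<exists>z\<in>fixset I G J. \<phi> z = \<phi> y * \<phi> y" by blast
      show "cmod (\<phi> y) = 1" using ph yc by (auto simp: characters_def)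
      show "cmod (\<phi> y - 1) < 1" using J(2) y by (simp add: dist_norm)
    qed
  qed
  thus ?thesis using J(1) by (auto simp: B_def)
qed

lemma prod_inj_carrier:
  assumes cg: "\<forall>i\<in>I. convergence_group (G i) (conv i)" and "i \<in> I" "g \<in> carrier (G i)"
  shows "prod_inj I G i g \<in> carrier (product_group I G)"
  using assms by (auto simp: prod_inj_def PiE_iff dest!: cg_group intro: group.is_monoid monoid.one_closed)

lemma prod_inj_mult:
  assumes cg: "\<forall>i\<in>I. convergence_group (G i) (conv i)" and "i \<in> I" "g \<in> carrier (G i)"
  shows "prod_inj I G i (g \<otimes>\<^bsub>G i\<^esub> g) = prod_inj I G i g \<otimes>\<^bsub>product_group I G\<^esub> prod_inj I G i g"
proof -
  have "\<one>\<^bsub>G j\<^esub> = \<one>\<^bsub>G j\<^esub> \<otimes>\<^bsub>G j\<^esub> \<one>\<^bsub>G j\<^esub>" if "j \<in> I" for j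
  proof -
    have "group (G j)" using cg that cg_group by auto
    thus ?thesis by (simp add: group.is_monoid monoid.one_closed monoid.l_one)
  qed
  thus ?thesis by (auto simp: prod_inj_def)
qed

lemma big_value:
  assumes cg: "\<forall>i\<in>I. convergence_group (G i) (conv i)"
    and ph: "\<phi> \<in> characters (product_group I G) (product_conv I G conv)"
    and i: "i \<in> I" and g: "g \<in> carrier (G i)" and ne: "\<phi> (prod_inj I G i g) \<noteq> 1"
  shows "\<exists>g'\<in>carrier (G i). cmod (\<phi> (prod_inj I G i g') - 1) \<ge> 1"
proof (rule ccontr)
  assume "\<not> ?thesis"
  hence sm: "\<And>y. y \<in> carrier (G i) \<Longrightarrow> cmod (\<phi> (prod_inj I G i y) - 1) < 1" by force
  have gi: "group (G i)" using cg i cg_group by auto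
  have "(\<lambda>y. \<phi> (prod_inj I G i y)) g = 1"
  proof (rule sq_trick[OF g])
    fix y assume y: "y \<in> carrier (G i)"
    have yc: "prod_inj I G i y \<in> carrier (product_group I G)" by (rule prod_inj_carrier[OF cg i y])
    have "y \<otimes>\<^bsub>G i\<^esub> y \<in> carrier (G i)" using gi y by (simp add: group.is_monoid monoid.m_closed)
    moreover have "\<phi> (prod_inj I G i (y \<otimes>\<^bsub>G i\<^esub> y)) = \<phi> (prod_inj I G i y) * \<phi> (prod_inj I G i y)"
      unfolding prod_inj_mult[OF cg i y] using ph yc by (auto simp: characters_def simp del: mult_product_group)
    ultimately show "\<exists>z\<in>carrier (G i). \<phi> (prod_inj I G i z) = \<phi> (prod_inj I G i y) * \<phi> (prod_inj I G i y)" by blast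
    show "cmod (\<phi> (prod_inj I G i y)) = 1" using ph yc by (auto simp: characters_def simp del: carrier_product_group)
    show "cmod (\<phi> (prod_inj I G i y) - 1) < 1" by (rule sm[OF y])
  qed
  with ne show False by simp
qed

theorem lemma2p8:
  fixes I :: "'i set"
    and G :: "'i \<Rightarrow> ('a, 'b) monoid_scheme"
    and conv :: "'i \<Rightarrow> 'a filter \<Rightarrow> 'a \<Rightarrow> bool"
    and M :: "(('i \<Rightarrow> 'a) \<Rightarrow> complex) set"
  assumes "\<forall>i\<in>I. convergence_group (G i) (conv i)"
    and "M \<subseteq> characters (product_group I G) (product_conv I G conv)"
    and "compactin (pointwise_top (carrier (product_group I G))) M"
  shows "\<exists>I0. I0 \<subseteq> I \<and> finite I0 \<and>
           (\<forall>\<phi>\<in>M. \<forall>i\<in>I - I0. \<forall>g\<in>carrier (G i). \<phi> (prod_inj I G i g) = 1)"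
proof (rule ccontr)
  assume neg: "\<not> ?thesis"
  note cg = assms(1)
  have Mc: "\<And>\<phi>. \<phi> \<in> M \<Longrightarrow> \<phi> \<in> characters (product_group I G) (product_conv I G conv)"
    using assms(2) by auto
  have grp: "\<And>i. i \<in> I \<Longrightarrow> group (G i)" using cg cg_group by auto
  have ex: "\<exists>x. (\<lambda>(i,\<phi>,g). i \<in> I - K \<and> \<phi> \<in> M \<and> g \<in> carrier (G i) \<and> cmod (\<phi> (prod_inj I G i g) - 1) \<ge> 1) x"
    if "finite K" for K
  proof -
    from neg have "\<not> (\<forall>\<phi>\<in>M. \<forall>i\<in>I - (K \<inter> I). \<forall>g\<in>carrier (G i). \<phi> (prod_inj I G i g) = 1)"
      using that by auto
    then obtain \<phi> i g where pig: "\<phi> \<in> M" "i \<in> I - K" "g \<in> carrier (G i)" "\<phi> (prod_inj I G i g) \<noteq> 1" by auto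
    then obtain g' where "g' \<in> carrier (G i)" "cmod (\<phi> (prod_inj I G i g') - 1) \<ge> 1"
      using big_value[OF cg Mc[OF pig(1)] _ pig(3,4)] by auto
    thus ?thesis using pig by (intro exI[of _ "(i,\<phi>,g')"]) auto
  qed
  define J where "J \<phi> = (SOME J. finite J \<and> J \<subseteq> I \<and> (\<forall>x\<in>fixset I G J. \<phi> x = 1))" for \<phi> :: "('i \<Rightarrow> 'a) \<Rightarrow> complex"
  have J: "finite (J \<phi>) \<and> J \<phi> \<subseteq> I \<and> (\<forall>x\<in>fixset I G (J \<phi>). \<phi> x = 1)" if "\<phi> \<in> M" for \<phi>
    unfolding J_def by (rule someI_ex) (rule char_support[OF cg Mc[OF that]])
  define ch where "ch K = (SOME x. (\<lambda>(i,\<phi>,g). i \<in> I - K \<and> \<phi> \<in> M \<and> g \<in> carrier (G i) \<and> cmod (\<phi> (prod_inj I G i g) - 1) \<ge> 1) x)" for K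
  define Ks where "Ks = rec_nat {} (\<lambda>n K. K \<union> {fst (ch K)} \<union> J (fst (snd (ch K))))"
  define idx where "idx n = fst (ch (Ks n))" for n
  define ph where "ph n = fst (snd (ch (Ks n)))" for n
  define gg where "gg n = snd (snd (ch (Ks n)))" for n
  have Ks0: "Ks 0 = {}" and KsS: "Ks (Suc n) = Ks n \<union> {idx n} \<union> J (ph n)" for n
    by (simp_all add: Ks_def idx_def ph_def)
  have fin_prop: "finite (Ks n) \<and> idx n \<in> I - Ks n \<and> ph n \<in> M \<and> gg n \<in> carrier (G (idx n)) \<and>
      cmod (ph n (prod_inj I G (idx n) (gg n)) - 1) \<ge> 1" for n
  proof (induction n)
    case 0
    have "(\<lambda>(i,\<phi>,g). i \<in> I - Ks 0 \<and> \<phi> \<in> M \<and> g \<in> carrier (G i) \<and> cmod (\<phi> (prod_inj I G i g) - 1) \<ge> 1) (ch (Ks 0))"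
      unfolding ch_def by (rule someI_ex) (rule ex, simp add: Ks0)
    then show ?case by (simp add: idx_def ph_def gg_def Ks0 split: prod.splits)
  next
    case (Suc n)
    hence "finite (Ks (Suc n))" using J[of "ph n"] by (simp add: KsS)
    moreover have "(\<lambda>(i,\<phi>,g). i \<in> I - Ks (Suc n) \<and> \<phi> \<in> M \<and> g \<in> carrier (G i) \<and> cmod (\<phi> (prod_inj I G i g) - 1) \<ge> 1) (ch (Ks (Suc n)))"
      unfolding ch_def by (rule someI_ex) (rule ex, fact)
    ultimately show ?case by (simp add: idx_def ph_def gg_def split: prod.splits)
  qed
  have Ksmono: "Ks a \<subseteq> Ks b" if "a \<le> b" for a b
    using that by (induction rule: dec_induct) (auto simp: KsS)
  have idx_in: "idx k \<in> Ks n" if "k < n" for k n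
    using Ksmono[of "Suc k" n] that by (auto simp: KsS)
  have J_in: "J (ph k) \<subseteq> Ks n" if "k < n" for k n
    using Ksmono[of "Suc k" n] that by (auto simp: KsS)
  have idxI: "idx n \<in> I" for n using fin_prop[of n] by auto
  have ggc: "gg n \<in> carrier (G (idx n))" for n using fin_prop[of n] by auto
  have inj: "inj idx"
  proof (rule injI)
    fix a b assume e: "idx a = idx b"
    show "a = b"
    proof (rule ccontr)
      assume "a \<noteq> b"
      hence "a < b \<or> b < a" by auto
      thus False using idx_in fin_prop e by (metis DiffD2)
    qed
  qed
  have notJ: "idx l \<notin> J (ph k)" if "k < l" for k l
    using J_in[OF that] fin_prop[of l] by auto
  define elt where "elt A = (\<lambda>j\<in>I. if j \<in> idx ` A then gg (inv_into UNIV idx j) else \<one>\<^bsub>G j\<^esub>)" for A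
  have elt_c: "elt A \<in> carrier (product_group I G)" for A
    using ggc grp by (auto simp: elt_def inv_f_f[OF inj] group.is_monoid monoid.one_closed)
  have elt_fix: "elt A \<in> fixset I G K" if "idx ` A \<inter> K = {}" "K \<subseteq> I" for A K
    using elt_c[of A] that by (auto simp: fixset_def elt_def)
  have elt_un: "elt (A \<union> A') = elt A \<otimes>\<^bsub>product_group I G\<^esub> elt A'" if "A \<inter> A' = {}" for A A'
  proof -
    have "(if j \<in> idx ` (A \<union> A') then gg (inv_into UNIV idx j) else \<one>\<^bsub>G j\<^esub>) =
      (if j \<in> idx ` A then gg (inv_into UNIV idx j) else \<one>\<^bsub>G j\<^esub>) \<otimes>\<^bsub>G j\<^esub> (if j \<in> idx ` A' then gg (inv_into UNIV idx j) else \<one>\<^bsub>G j\<^esub>)"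
      if j: "j \<in> I" for j
    proof -
      have gj: "monoid (G j)" using grp[OF j] by (simp add: group.is_monoid)
      have "j \<in> idx ` A \<Longrightarrow> j \<notin> idx ` A'" using \<open>A \<inter> A' = {}\<close> inj by (auto dest: injD)
      moreover have "j \<in> idx ` B \<Longrightarrow> gg (inv_into UNIV idx j) \<in> carrier (G j)" for B
        using ggc by (auto simp: inv_f_f[OF inj])
      ultimately show ?thesis using gj by (auto simp: monoid.l_one monoid.r_one monoid.one_closed)
    qed
    thus ?thesis by (auto simp: elt_def)
  qed
  have elt_single: "elt {n} = prod_inj I G (idx n) (gg n)" for n
    by (auto simp: elt_def prod_inj_def inv_f_f[OF inj])
  define Bs where "Bs m = rec_nat {} (\<lambda>n A. if n < m \<or> cmod (ph n (elt A) - 1) \<ge> 1/2 then A else insert n A)" for m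
  have Bs0: "Bs m 0 = {}" and BsS: "Bs m (Suc n) = (if n < m \<or> cmod (ph n (elt (Bs m n)) - 1) \<ge> 1/2 then Bs m n else insert n (Bs m n))" for m n
    by (simp_all add: Bs_def)
  have Bs_sub: "Bs m n \<subseteq> {m..<n}" for m n
    by (induction n) (auto simp: Bs0 BsS)
  have Bs_stab: "Bs m n \<inter> {..<j} = Bs m j" if "j \<le> n" for m n j
    using that
  proof (induction rule: dec_induct)
    case base then show ?case using Bs_sub[of m j] by auto
  next
    case (step n) then show ?case by (auto simp: BsS)
  qed
  have Bs_big: "cmod (ph n (elt (Bs m (Suc n))) - 1) \<ge> 1/2" if "m \<le> n" for m n
  proof (cases "cmod (ph n (elt (Bs m n)) - 1) \<ge> 1/2")
    case True then show ?thesis by (simp add: BsS)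
  next
    case False
    have nA: "Bs m n \<inter> {n} = {}" using Bs_sub[of m n] by auto
    have e: "Bs m (Suc n) = Bs m n \<union> {n}" using False that by (auto simp: BsS)
    have chn: "ph n \<in> characters (product_group I G) (product_conv I G conv)" using Mc fin_prop by auto
    define c where "c = ph n (elt (Bs m n))"
    define w where "w = ph n (elt {n})"
    have "ph n (elt (Bs m (Suc n))) = c * w" unfolding e elt_un[OF nA] c_def w_def
      using chn elt_c by (auto simp: characters_def simp del: mult_product_group carrier_product_group)
    moreover have "cmod c = 1" unfolding c_def using chn elt_c by (auto simp: characters_def simp del: carrier_product_group)
    moreover have "cmod (w - 1) \<ge> 1" unfolding w_def elt_single using fin_prop by auto
    moreover have "cmod (c * w - c) = cmod c * cmod (w - 1)"
    proof -
      have "c * w - c = c * (w - 1)" by (simp add: algebra_simps)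
      thus ?thesis by (simp add: norm_mult)
    qed
    moreover have "cmod (c * w - c) \<le> cmod (c * w - 1) + cmod (c - 1)"
    proof -
      have "c * w - c = (c * w - 1) - (c - 1)" by simp
      thus ?thesis using norm_triangle_ineq4[of "c*w-1" "c-1"] by simp
    qed
    ultimately show ?thesis using False c_def by simp
  qed
  define P where "P m = elt (\<Union>n. Bs m n)" for m
  have Pc: "P m \<in> carrier (product_group I G)" for m unfolding P_def by (rule elt_c)
  have P_val: "ph k (P m) = ph k (elt (Bs m (Suc k)))" for m k
  proof -
    define R where "R = (\<Union>n. Bs m n) - Bs m (Suc k)"
    have sub: "Bs m (Suc k) \<subseteq> (\<Union>n. Bs m n)" by auto
    have un: "(\<Union>n. Bs m n) = Bs m (Suc k) \<union> R" using sub by (auto simp: R_def)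
    have dj: "Bs m (Suc k) \<inter> R = {}" by (auto simp: R_def)
    have Rgt: "l \<in> R \<Longrightarrow> k < l" for l
    proof (rule ccontr)
      assume l: "l \<in> R" "\<not> k < l"
      then obtain n where n: "l \<in> Bs m n" by (auto simp: R_def)
      have "l \<in> Bs m (Suc k)"
      proof (cases "n \<le> Suc k")
        case True
        then have "Bs m n \<subseteq> Bs m (Suc k)" using Bs_stab[of n "Suc k" m] by blast
        thus ?thesis using n by blast
      next
        case False
        then have "Bs m (Suc k) = Bs m n \<inter> {..<Suc k}" using Bs_stab[of "Suc k" n m] by simp
        thus ?thesis using n l(2) by auto
      qed
      thus False using l by (auto simp: R_def)
    qed
    have chk: "ph k \<in> characters (product_group I G) (product_conv I G conv)" using Mc fin_prop by auto
    have "ph k (elt R) = 1"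
      using J[of "ph k"] fin_prop[of k] elt_fix[of R "J (ph k)"] Rgt notJ by blast
    moreover have "ph k (P m) = ph k (elt (Bs m (Suc k))) * ph k (elt R)"
      unfolding P_def un elt_un[OF dj]
      using chk elt_c by (auto simp: characters_def simp del: mult_product_group carrier_product_group)
    ultimately show ?thesis by simp
  qed
  define mf where "mf \<psi> = (SOME m. \<forall>n\<ge>m. idx n \<notin> J \<psi>)" for \<psi>
  have mf: "\<forall>n\<ge>mf \<psi>. idx n \<notin> J \<psi>" if "\<psi> \<in> M" for \<psi>
  proof -
    have "finite (idx -` J \<psi>)" using J[OF that] inj by (simp add: finite_vimageI)
    then obtain m where "idx -` J \<psi> \<subseteq> {..<m}" using finite_nat_bounded by blast
    hence "\<forall>n\<ge>m. idx n \<notin> J \<psi>" by auto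
    thus ?thesis unfolding mf_def by (rule someI)
  qed
  have psiP: "\<psi> (P (mf \<psi>)) = 1" if "\<psi> \<in> M" for \<psi>
  proof -
    have "idx ` (\<Union>n. Bs (mf \<psi>) n) \<inter> J \<psi> = {}" using Bs_sub mf[OF that] by fastforce
    thus ?thesis using J[OF that] elt_fix unfolding P_def by blast
  qed
  let ?T = "pointwise_top (carrier (product_group I G))"
  define U where "U \<psi> = {y \<in> topspace ?T. y (P (mf \<psi>)) \<in> ball 1 (1/2)}" for \<psi>
  have Uo: "openin ?T (U \<psi>)" for \<psi>
    unfolding U_def pointwise_top_def
    by (rule openin_continuous_map_preimage[OF continuous_map_product_projection[OF Pc]]) simp
  have Msub: "M \<subseteq> topspace ?T" using assms(3) by (rule compactin_subset_topspace)
  have cov: "M \<subseteq> \<Union>(U ` M)"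
  proof
    fix \<psi> assume p: "\<psi> \<in> M"
    hence "\<psi> \<in> U \<psi>" using Msub psiP[OF p] by (auto simp: U_def)
    thus "\<psi> \<in> \<Union>(U ` M)" using p by blast
  qed
  obtain F where F: "finite F" "F \<subseteq> U ` M" "M \<subseteq> \<Union>F"
    using assms(3) Uo cov unfolding compactin_def by (metis (no_types, lifting) imageE)
  then obtain \<Psi> where Psi: "\<Psi> \<subseteq> M" "finite \<Psi>" "F = U ` \<Psi>" by (meson finite_subset_image)
  define k where "k = Max (insert 0 (mf ` \<Psi>))"
  have "ph k \<in> M" using fin_prop by auto
  then obtain \<psi> where psi: "\<psi> \<in> \<Psi>" "ph k \<in> U \<psi>" using F Psi by auto
  have "mf \<psi> \<le> k" unfolding k_def using psi Psi by (intro Max_ge) auto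
  hence "cmod (ph k (P (mf \<psi>)) - 1) \<ge> 1/2" using P_val Bs_big by simp
  moreover have "cmod (ph k (P (mf \<psi>)) - 1) < 1/2" using psi(2) by (simp add: U_def dist_norm norm_minus_commute)
  ultimately show False by simp
qed


end
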